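(* In the setting described in the context, for every $n\ge1$ and every $y\in\mathbb R^p$, $$\tau_n\widetilde J(x_n,w_n,y)\le\langle x_{n+1}-z_{n+1},x^\star-x_{n+1}\rangle+\frac1\beta\langle y_n-y_{n-1},y-y_n\rangle+\psi\delta_n\langle x_n-z_{n+1},x_{n+1}-x_n\rangle+\tau_n\langle\theta_n,x_n-x_{n+1}\rangle,$$ where $\widetilde J(x,w,y)=F(x,w)+\langle y,H(x)-w\rangle-F(x^\star,w^\star)$.
   Context: Let $f:\mathbb{R}^p\to(-\infty,+\infty]$ and $g:\mathbb{R}^q\to(-\infty,+\infty]$ be proper closed convex functions; $f^*$ is the Fenchel conjugate, $\mathrm{dom}$ the effective domain, $\mathrm{Prox}_{\lambda h}(x)=\arg\min_u\{h(u)+\frac{1}{2\lambda}\|u-x\|^2\}$. Let $h:\mathbb R^q\to\mathbb R$ be convex with $L_h$-Lipschitz gradient, and $H:\mathrm{dom}(g)\to\mathrm{dom}(f)$ continuously differentiable with Jacobian $H'$, such that $x\mapsto\langle H(x),y\rangle$ is convex for every $y\in\mathrm{dom}(f^* )$. Set $\Phi(x,y)=h(x)+\langle H(x),y\rangle$ and $\mathcal L(x,y)=g(x)+\Phi(x,y)-f^*(y)$. Assume: (A1) the set of saddle points $\{(x^\star,y^\star)\in\mathrm{dom}(g)\times\mathrm{dom}(f^* ):-\nabla_x\Phi(x^\star,y^\star)\in\partial g(x^\star),\ \nabla_y\Phi(x^\star,y^\star)\in\partial f^*(y^\star)\}$ is nonempty, $\mathrm{dom}(g)\times\mathrm{dom}(f^*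 )\subseteq\mathrm{dom}(\Phi)$, $\mathcal L(x^\star,y^\star)$ finite; (A2) $\Phi(\cdot,y)$ convex differentiable, $\Phi(x,\cdot)$ concave differentiable, and on every pair of bounded sets $\mathcal X,\mathcal Y$ there are $L_{yy},L_{xx}\ge0,L_{xy}>0$ with $\|\nabla_y\Phi(x,y)-\nabla_y\Phi(x,\tilde y)\|\le L_{yy}\|y-\tilde y\|$, $\|\nabla_x\Phi(x,y)-\nabla_x\Phi(\tilde x,\tilde y)\|\le L_{xx}\|x-\tilde x\|+L_{xy}\|y-\tilde y\|$ on $(\mathcal X\cap\mathrm{dom}(g))\times(\mathcal Y\cap\mathrm{dom}(f^* ))$. Let $F(x,w)=g(x)+h(x)+f(w)$, and let $(x^\star,w^\star,y^\star)$ be a fixed point of $\widetilde\Omega=\{(x,w,y)\in\mathrm{dom}(g)\times\mathrm{dom}(f)\times\mathrm{dom}(f^* ): -H'(x)^\top y-\nabla h(x)\in\partial g(x),\ y\in\partial f(w),\ H(x)=w\}$. Algorithm PDAc-L (applied to this $\Phi$): choose $\psi\in(1,1+\sqrt3)$, $\xi>0$, $\varphi>1$ with $\omega:=2\psi-\xi-\frac{\psi^3\varphi}{1+\psi}>0$, $\tau_{\max}>0$, $\nu,\mu\in(0,1)$, $\eta\in[0,1)$, integer $M\ge1$, $\beta>0$, $x_0\in\mathrm{dom}(g)$, $y_0\in\mathrm{dom}(f^* )$, $\tau_0\in(0,\tau_{\max}]$; $z_0=x_0$, $\delta_0=1$. For $n\ge1$: $z_n=\frac{\psi-1}{\psi}x_{n-1}+\frac1\psi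 z_{n-1}$, $x_n=\mathrm{Prox}_{\tau_{n-1}g}(z_n-\tau_{n-1}\nabla_x\Phi(x_{n-1},y_{n-1}))$; with $\tau=\min\{\varphi\tau_{n-1},\tau_{\max}\}$, set $\tau_n=\tau\mu^i$, $y_n=\mathrm{Prox}_{\beta\tau_nf^*}(y_{n-1}+\beta\tau_nH(x_n))$, where $i\ge0$ is the smallest integer with $\frac{\tau_n\tau_{n-1}}{\xi}\|\theta_n\|^2+2\tau_n\Phi_n^y\le\nu r_n+(1-\nu)c_n$, $\theta_n=\nabla_x\Phi(x_n,y_n)-\nabla_x\Phi(x_{n-1},y_{n-1})$, $\Phi_n^y=\Phi(x_n,y_{n-1})+\langle\nabla_y\Phi(x_n,y_{n-1}),y_n-y_{n-1}\rangle-\Phi(x_n,y_n)$ (here $=0$), $r_n=\omega\delta_{n-1}\|x_n-x_{n-1}\|^2+\frac1\beta\|y_n-y_{n-1}\|^2$, $c_n=\frac{\eta}{|\mathcal I_n|}\sum_{i\in\mathcal I_n}r_i$, $\mathcal I_n=\{n-1,\dots,\max\{n-M,1\}\}$ ($c_1:=0$); $\delta_n=\tau_n/\tau_{n-1}$. Define $w_n=\mathrm{Prox}_{f/(\beta\tau_n)}(y_{n-1}/(\beta\tau_n)+H(x_n))$, so that $y_n=y_{n-1}+\beta\tau_n(H(x_n)-w_n)$. *)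

theory Defs
  imports "HOL-Analysis.Analysis"
begin

definition edom :: "('a \<Rightarrow> ereal) \<Rightarrow> 'a set" where
  "edom f = {x. f x < \<infinity>}"

definition epigraph :: "('a \<Rightarrow> ereal) \<Rightarrow> ('a \<times> real) set" where
  "epigraph f = {(x, t). f x \<le> ereal t}"

definition proper_fun :: "('a \<Rightarrow> ereal) \<Rightarrow> bool" where
  "proper_fun f \<longleftrightarrow> (\<forall>x. f x \<noteq> -\<infinity>) \<and> (\<exists>x. f x < \<infinity>)"

definition closed_convex_proper ::
  "('a::real_normed_vector \<Rightarrow> ereal) \<Rightarrow> bool" where
  "closed_convex_proper f \<longleftrightarrow>
     proper_fun f \<and> convex (epigraph f) \<and> closed (epigraph f)"

definition fconj :: "('a::real_inner \<Rightarrow> ereal) \<Rightarrow> 'a \<Rightarrow> ereal" where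
  "fconj f y = (SUP w. ereal (inner w y) - f w)"

definition subdiff :: "('a::real_inner \<Rightarrow> ereal) \<Rightarrow> 'a \<Rightarrow> 'a set" where
  "subdiff f x = {v. f x < \<infinity> \<and> (\<forall>u. f x + ereal (inner v (u - x)) \<le> f u)}"

definition Prox :: "real \<Rightarrow> ('a::real_normed_vector \<Rightarrow> ereal) \<Rightarrow> 'a \<Rightarrow> 'a" where
  "Prox lam h x = (SOME u. \<forall>v. h u + ereal (norm (u - x)^2 / (2 * lam))
                              \<le> h v + ereal (norm (v - x)^2 / (2 * lam)))"

text \<open>Transposed Jacobian: jacT D y is the vector H'(x)^T y, where D = H'(x) is linear.\<close>
definition jacT :: "('a::euclidean_space \<Rightarrow> 'b::real_inner) \<Rightarrow> 'b \<Rightarrow> 'a" where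
  "jacT D y = (\<Sum>i\<in>Basis. inner y (D i) *\<^sub>R i)"

definition Phi :: "('a \<Rightarrow> real) \<Rightarrow> ('a \<Rightarrow> 'b::real_inner) \<Rightarrow> 'a \<Rightarrow> 'b \<Rightarrow> real" where
  "Phi h H x y = h x + inner (H x) y"

definition gradxPhi ::
  "('a \<Rightarrow> 'a::euclidean_space) \<Rightarrow> ('a \<Rightarrow> 'a \<Rightarrow> 'b::real_inner) \<Rightarrow> 'a \<Rightarrow> 'b \<Rightarrow> 'a" where
  "gradxPhi gradh H' x y = gradh x + jacT (H' x) y"

definition gradyPhi :: "('a \<Rightarrow> 'b) \<Rightarrow> 'a \<Rightarrow> 'b \<Rightarrow> 'b" where
  "gradyPhi H x y = H x"

definition ytrial :: "('b::real_inner \<Rightarrow> ereal) \<Rightarrow> ('a \<Rightarrow> 'b) \<Rightarrow> real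
    \<Rightarrow> (nat \<Rightarrow> 'a) \<Rightarrow> (nat \<Rightarrow> 'b) \<Rightarrow> nat \<Rightarrow> real \<Rightarrow> 'b" where
  "ytrial f H \<beta> x y n t = Prox (\<beta> * t) (fconj f) (y (n - 1) + (\<beta> * t) *\<^sub>R H (x n))"

definition rval :: "real \<Rightarrow> real \<Rightarrow> real \<Rightarrow> 'a::real_normed_vector \<Rightarrow> 'a
    \<Rightarrow> 'b::real_normed_vector \<Rightarrow> 'b \<Rightarrow> real" where
  "rval \<omega> \<beta> dprev xn xprev yn yprev =
     \<omega> * dprev * norm (xn - xprev)^2 + (1 / \<beta>) * norm (yn - yprev)^2"

definition Iset :: "nat \<Rightarrow> nat \<Rightarrow> nat set" where
  "Iset M n = {max (n - M) 1 .. n - 1}"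

definition ls_cond :: "('b::euclidean_space \<Rightarrow> ereal) \<Rightarrow> ('a::euclidean_space \<Rightarrow> real)
    \<Rightarrow> ('a \<Rightarrow> 'a) \<Rightarrow> ('a \<Rightarrow> 'b) \<Rightarrow> ('a \<Rightarrow> 'a \<Rightarrow> 'b)
    \<Rightarrow> real \<Rightarrow> real \<Rightarrow> real \<Rightarrow> real \<Rightarrow> real \<Rightarrow> nat
    \<Rightarrow> (nat \<Rightarrow> 'a) \<Rightarrow> (nat \<Rightarrow> 'b) \<Rightarrow> (nat \<Rightarrow> real) \<Rightarrow> (nat \<Rightarrow> real)
    \<Rightarrow> nat \<Rightarrow> real \<Rightarrow> bool" where
  "ls_cond f h gradh H H' \<omega> \<xi> \<nu> \<eta> \<beta> M x y \<tau> \<delta> n t \<longleftrightarrow>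
     (let yt = ytrial f H \<beta> x y n t;
          \<theta> = gradxPhi gradh H' (x n) yt - gradxPhi gradh H' (x (n - 1)) (y (n - 1));
          Phiy = Phi h H (x n) (y (n - 1)) + inner (gradyPhi H (x n) (y (n - 1))) (yt - y (n - 1))
                 - Phi h H (x n) yt;
          r = rval \<omega> \<beta> (\<delta> (n - 1)) (x n) (x (n - 1)) yt (y (n - 1));
          c = (if n = 1 then 0
               else \<eta> / real (card (Iset M n)) *
                    (\<Sum>i\<in>Iset M n. rval \<omega> \<beta> (\<delta> (i - 1)) (x i) (x (i - 1)) (y i) (y (i - 1))))
      in t * \<tau> (n - 1) / \<xi> * norm \<theta>^2 + 2 * t * Phiy \<le> \<nu> * r + (1 - \<nu>) * c)"

definition pdacl_iterates where
  "pdacl_iterates f g h gradh H H' \<psi> \<xi> \<phi> \<tau>max \<nu> \<mu> \<eta> M \<beta> x y z \<tau> \<delta> w \<longleftrightarrow>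
     1 < \<psi> \<and> \<psi> < 1 + sqrt 3 \<and> 0 < \<xi> \<and> 1 < \<phi> \<and>
     0 < 2 * \<psi> - \<xi> - \<psi>^3 * \<phi> / (1 + \<psi>) \<and>
     0 < \<tau>max \<and> 0 < \<nu> \<and> \<nu> < 1 \<and> 0 < \<mu> \<and> \<mu> < 1 \<and> 0 \<le> \<eta> \<and> \<eta> < 1 \<and>
     1 \<le> M \<and> 0 < \<beta> \<and>
     x 0 \<in> edom g \<and> y 0 \<in> edom (fconj f) \<and> 0 < \<tau> 0 \<and> \<tau> 0 \<le> \<tau>max \<and>
     z 0 = x 0 \<and> \<delta> 0 = 1 \<and>
     (\<forall>n\<ge>1.
        z n = ((\<psi> - 1) / \<psi>) *\<^sub>R x (n - 1) + (1 / \<psi>) *\<^sub>R z (n - 1) \<and>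
        x n = Prox (\<tau> (n - 1)) g (z n - \<tau> (n - 1) *\<^sub>R gradxPhi gradh H' (x (n - 1)) (y (n - 1))) \<and>
        (let \<omega> = 2 * \<psi> - \<xi> - \<psi>^3 * \<phi> / (1 + \<psi>);
             tb = min (\<phi> * \<tau> (n - 1)) \<tau>max;
             C = ls_cond f h gradh H H' \<omega> \<xi> \<nu> \<eta> \<beta> M x y \<tau> \<delta> n
         in (\<exists>i::nat. \<tau> n = tb * \<mu>^i \<and> C (tb * \<mu>^i) \<and> (\<forall>j<i. \<not> C (tb * \<mu>^j)))) \<and>
        y n = ytrial f H \<beta> x y n (\<tau> n) \<and>
        \<delta> n = \<tau> n / \<tau> (n - 1) \<and>
        w n = Prox (1 / (\<beta> * \<tau> n)) f ((1 / (\<beta> * \<tau> n)) *\<^sub>R y (n - 1) + H (x n)))"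

end

theory Submission
  imports Defs
begin

lemma convex_tangent:
  fixes \<phi> :: "'a::real_normed_vector \<Rightarrow> real"
  assumes cv: "convex_on C \<phi>" and uC: "u \<in> C" and vC: "v \<in> C"
    and der: "(\<phi> has_derivative D) (at u)"
  shows "\<phi> u + D (v - u) \<le> \<phi> v"
proof -
  define d where "d = v - u"
  have lin: "linear D" using der has_derivative_linear by blast
  have c1: "((\<lambda>t::real. u + t *\<^sub>R d) has_derivative (\<lambda>t. t *\<^sub>R d)) (at 0)"
    by (auto intro!: derivative_eq_intros)
  have c2: "(\<phi> has_derivative D) (at (u + 0 *\<^sub>R d))" using der by simp
  have "((\<lambda>t. \<phi> (u + t *\<^sub>R d)) has_derivative (\<lambda>t. D (t *\<^sub>R d))) (at 0)"
    using diff_chain_at[OF c1 c2] by (simp add: o_def)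
  moreover have "(\<lambda>t. D (t *\<^sub>R d)) = (\<lambda>t. D d * t)"
    using lin by (auto simp: linear_scale mult.commute)
  ultimately have "((\<lambda>t. \<phi> (u + t *\<^sub>R d)) has_field_derivative D d) (at 0)"
    by (simp add: has_field_derivative_def mult.commute[of _ "D d"])
  hence lim: "((\<lambda>t. (\<phi> (u + t *\<^sub>R d) - \<phi> u) / t) \<longlongrightarrow> D d) (at_right 0)"
    unfolding has_field_derivative_iff by (auto intro: tendsto_mono at_le)
  have ev: "eventually (\<lambda>t. (\<phi> (u + t *\<^sub>R d) - \<phi> u) / t \<le> \<phi> v - \<phi> u) (at_right (0::real))"
    using eventually_at_right_real[of 0 1]
  proof (rule eventually_mono)
    fix t :: real assume t: "t \<in> {0<..<1}"
    have "u + t *\<^sub>R d = (1 - t) *\<^sub>R u + t *\<^sub>R v" by (simp add: d_def algebra_simps)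
    hence "\<phi> (u + t *\<^sub>R d) \<le> (1 - t) * \<phi> u + t * \<phi> v"
      using convex_onD[OF cv, of t u v] t uC vC by auto
    hence "\<phi> (u + t *\<^sub>R d) - \<phi> u \<le> t * (\<phi> v - \<phi> u)" by (simp add: algebra_simps)
    thus "(\<phi> (u + t *\<^sub>R d) - \<phi> u) / t \<le> \<phi> v - \<phi> u" using t by (simp add: divide_simps mult.commute)
  qed (simp)
  have "D d \<le> \<phi> v - \<phi> u"
    using tendsto_upperbound[OF lim ev] by simp
  thus ?thesis by (simp add: d_def)
qed


lemma ccp_props:
  assumes "closed_convex_proper f"
  shows "\<And>x. f x \<noteq> -\<infinity>" "\<exists>x. f x < \<infinity>" "convex (epigraph f)" "closed (epigraph f)"
  using assms by (auto simp: closed_convex_proper_def proper_fun_def)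

lemma affine_minorant:
  fixes f :: "'a::euclidean_space \<Rightarrow> ereal"
  assumes ccp: "closed_convex_proper f"
  shows "\<exists>c d. \<forall>u. ereal (inner c u + d) \<le> f u"
proof -
  obtain x0 where x0: "f x0 < \<infinity>" using ccp_props[OF ccp] by blast
  have "f x0 \<noteq> -\<infinity>" using ccp_props[OF ccp] by blast
  then obtain f0 where f0: "f x0 = ereal f0" using x0 by (cases "f x0") auto
  have nin: "(x0, f0 - 1) \<notin> epigraph f" using f0 by (simp add: epigraph_def)
  obtain a b where ab: "inner a (x0, f0 - 1) < b" "\<forall>p\<in>epigraph f. inner a p > b"
    using separating_hyperplane_closed_point[OF ccp_props(3,4)[OF ccp] nin] by blast
  have "(x0, f0) \<in> epigraph f" using f0 by (simp add: epigraph_def)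
  hence "inner a (x0, f0) > b" using ab by blast
  hence pos: "snd a > 0" using ab(1)
    by (cases a) (auto simp: inner_prod_def algebra_simps)
  show ?thesis
  proof (intro exI allI)
    fix u
    show "ereal (inner (- (1 / snd a) *\<^sub>R fst a) u + b / snd a) \<le> f u"
    proof (cases "f u")
      case (real r)
      hence "(u, r) \<in> epigraph f" by (simp add: epigraph_def)
      hence "inner a (u, r) > b" using ab by blast
      hence "inner (fst a) u + snd a * r > b" by (cases a) (auto simp: inner_prod_def)
      hence "r > (b - inner (fst a) u) / snd a" using pos by (simp add: field_simps)
      thus ?thesis using real pos by (simp add: field_simps)
    next
      case PInf thus ?thesis by simp
    next
      case MInf thus ?thesis using ccp_props[OF ccp] by blast
    qed
  qed
qed


lemma radius_bound:
  fixes r lam C K0 :: real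
  assumes "lam > 0" "r \<ge> 0" "C \<ge> 0" "r^2 / (2*lam) \<le> K0 + C * r"
  shows "r \<le> 4*lam*C + 4*lam*\<bar>K0\<bar> + 1"
proof (rule ccontr)
  assume "\<not> ?thesis"
  hence r: "r > 4*lam*C + 4*lam*\<bar>K0\<bar> + 1" by simp
  have A: "r^2 \<le> 2*lam*K0 + 2*lam*C*r" using assms by (simp add: field_simps)
  have l1: "lam * \<bar>K0\<bar> \<ge> 0" using assms by simp
  have l2: "lam * C \<ge> 0" using assms by simp
  have "4*lam*C \<le> r" using r l1 by linarith
  hence "4*lam*C*r \<le> r * r" using assms by (intro mult_right_mono) auto
  with A have B: "r*r \<le> 4*lam*K0" by (simp add: power2_eq_square)
  have "4*lam*K0 \<le> 4*lam*\<bar>K0\<bar>" using assms by (intro mult_left_mono) auto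
  with B have C: "r*r \<le> 4*lam*\<bar>K0\<bar>" by linarith
  have "1 \<le> r" using r l1 l2 by linarith
  hence "r*1 \<le> r*r" using assms by (intro mult_left_mono) auto
  thus False using C r l2 by linarith
qed

lemma prox_exists:
  fixes f :: "'a::euclidean_space \<Rightarrow> ereal"
  assumes ccp: "closed_convex_proper f" and lam: "lam > 0"
  shows "\<exists>u. \<forall>v. f u + ereal (norm (u - a)^2 / (2 * lam)) \<le> f v + ereal (norm (v - a)^2 / (2 * lam))"
proof -
  define q where "q v = norm (v - a)^2 / (2 * lam)" for v
  obtain c d where cd: "\<And>u. ereal (inner c u + d) \<le> f u" using affine_minorant[OF ccp] by blast
  obtain x0 where x0: "f x0 < \<infinity>" using ccp_props[OF ccp] by blast
  have "f x0 \<noteq> -\<infinity>" using ccp_props[OF ccp] by blast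
  then obtain f0 where f0: "f x0 = ereal f0" using x0 by (cases "f x0") auto
  define m0 where "m0 = f0 + q x0"
  define K where "K = epigraph f \<inter> {p. snd p + q (fst p) \<le> m0}"
  have contq: "continuous_on UNIV (\<lambda>p::'a\<times>real. snd p + q (fst p))"
    unfolding q_def using lam by (intro continuous_intros) auto
  have "closed K" unfolding K_def
    by (intro closed_Int ccp_props(4)[OF ccp] closed_Collect_le[OF contq continuous_on_const])
  define K0 where "K0 = m0 - d - inner c a"
  define R where "R = 4*lam*norm c + 4*lam*\<bar>K0\<bar> + 1"
  define B2 where "B2 = norm c * (norm a + R) + \<bar>d\<bar> + \<bar>m0\<bar>"
  have "K \<subseteq> cball a R \<times> cball 0 B2"
  proof
    fix p assume pK: "p \<in> K"
    obtain u t where p: "p = (u, t)" by (cases p)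
    have ft: "f u \<le> ereal t" using pK p by (simp add: K_def epigraph_def)
    have le: "t + q u \<le> m0" using pK p by (simp add: K_def)
    have ct: "inner c u + d \<le> t" using cd[of u] ft by (metis ereal_less_eq(3) order_trans)
    have q0: "q u \<ge> 0" using lam by (simp add: q_def)
    have "inner c u = inner c (u - a) + inner c a" by (simp add: inner_diff_right)
    moreover have "inner c (u - a) \<ge> - (norm c * norm (u - a))"
      using Cauchy_Schwarz_ineq2[of c "u - a"] by (simp add: abs_le_iff)
    ultimately have "norm (u - a)^2 / (2*lam) \<le> K0 + norm c * norm (u - a)"
      using ct le by (simp add: K0_def q_def)
    hence r: "norm (u - a) \<le> R" unfolding R_def by (rule radius_bound[OF lam norm_ge_zero norm_ge_zero])
    hence nu: "norm u \<le> norm a + R" using norm_triangle_sub[of u a] by (simp add: norm_minus_commute)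
    have "\<bar>inner c u\<bar> \<le> norm c * norm u" by (rule Cauchy_Schwarz_ineq2)
    also have "\<dots> \<le> norm c * (norm a + R)" using nu by (simp add: mult_left_mono)
    finally have "\<bar>t\<bar> \<le> B2" using ct le q0 unfolding B2_def by linarith
    thus "p \<in> cball a R \<times> cball 0 B2" using r p by (simp add: dist_norm norm_minus_commute)
  qed
  hence "bounded K" by (rule bounded_subset[OF bounded_Times[OF bounded_cball bounded_cball], rotated])
  hence "compact K" using \<open>closed K\<close> by (simp add: compact_eq_bounded_closed)
  have x0K: "(x0, f0) \<in> K" using f0 by (simp add: K_def epigraph_def m0_def)
  obtain p where pK: "p \<in> K" and pmin: "\<And>p'. p' \<in> K \<Longrightarrow> snd p + q (fst p) \<le> snd p' + q (fst p')"
    using continuous_attains_inf[OF \<open>compact K\<close> _ continuous_on_subset[OF contq]] x0K by blast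
  have pm0: "snd p + q (fst p) \<le> m0" using pmin[OF x0K] by (simp add: m0_def)
  have fp: "f (fst p) \<le> ereal (snd p)" using pK by (cases p) (simp add: K_def epigraph_def)
  show ?thesis
  proof (intro exI allI)
    fix v
    show "f (fst p) + ereal (norm (fst p - a)^2 / (2 * lam)) \<le> f v + ereal (norm (v - a)^2 / (2 * lam))"
    proof (cases "f v")
      case (real r)
      have "snd p + q (fst p) \<le> r + q v"
      proof (cases "(v, r) \<in> K")
        case True thus ?thesis using pmin[OF True] by simp
      next
        case False
        have "(v, r) \<in> epigraph f" using real by (simp add: epigraph_def)
        hence "r + q v > m0" using False by (simp add: K_def)
        thus ?thesis using pm0 by linarith
      qed
      hence "f (fst p) + ereal (q (fst p)) \<le> ereal (r + q v)"
        using fp by (metis add_right_mono ereal_less_eq(3) order_trans plus_ereal.simps(1))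
      thus ?thesis using real by (simp add: q_def)
    next
      case PInf thus ?thesis by simp
    next
      case MInf thus ?thesis using ccp_props[OF ccp] by blast
    qed
  qed
qed


lemma small_t_limit:
  fixes A B C :: real
  assumes C: "C \<ge> 0" and h: "\<And>t. 0 < t \<Longrightarrow> t < 1 \<Longrightarrow> A \<le> B + t * C"
  shows "A \<le> B"
proof (rule ccontr)
  assume "\<not> A \<le> B"
  hence e: "A - B > 0" by simp
  define t where "t = min (1/2) ((A - B) / (2 * C + 1))"
  have t0: "t > 0" "t < 1" using e C by (auto simp: t_def)
  have "t * C \<le> (A - B) / (2 * C + 1) * C" using C t0 by (intro mult_right_mono) (auto simp: t_def)
  also have "\<dots> < A - B"
  proof -
    have "B*C \<le> A*C" using e C by (intro mult_right_mono) auto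
    thus ?thesis using e C by (simp add: field_simps)
  qed
  finally show False using h[OF t0] by linarith
qed

lemma prox_subgrad:
  fixes f :: "'a::euclidean_space \<Rightarrow> ereal"
  assumes ccp: "closed_convex_proper f" and lam: "lam > 0"
    and min: "\<And>v. f u + ereal (norm (u - a)^2 / (2 * lam)) \<le> f v + ereal (norm (v - a)^2 / (2 * lam))"
  shows "f u < \<infinity>" "(1 / lam) *\<^sub>R (a - u) \<in> subdiff f u"
proof -
  define q where "q v = norm (v - a)^2 / (2 * lam)" for v
  obtain x0 where x0: "f x0 < \<infinity>" using ccp_props[OF ccp] by blast
  have "f x0 + ereal (q x0) < \<infinity>" using x0 by simp
  hence "f u + ereal (q u) < \<infinity>" using min[of x0] unfolding q_def by (rule le_less_trans[rotated])
  thus fu: "f u < \<infinity>" by auto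
  have "f u \<noteq> -\<infinity>" using ccp_props[OF ccp] by blast
  then obtain fu where fu': "f u = ereal fu" using fu by (cases "f u") auto
  show "(1 / lam) *\<^sub>R (a - u) \<in> subdiff f u"
    unfolding subdiff_def
  proof (intro CollectI conjI allI fu)
    fix v
    show "f u + ereal (inner ((1 / lam) *\<^sub>R (a - u)) (v - u)) \<le> f v"
    proof (cases "f v")
      case (real fv)
      have key: "fu + inner ((1 / lam) *\<^sub>R (a - u)) (v - u) \<le> fv + t * (norm (v - u)^2 / (2*lam))"
        if t: "0 < t" "t < 1" for t
      proof -
        define ut where "ut = (1 - t) *\<^sub>R u + t *\<^sub>R v"
        have "(u, fu) \<in> epigraph f" "(v, fv) \<in> epigraph f" using fu' real by (auto simp: epigraph_def)
        hence "(1 - t) *\<^sub>R (u, fu) + t *\<^sub>R (v, fv) \<in> epigraph f"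
          using ccp_props(3)[OF ccp] t by (intro convexD) auto
        hence "f ut \<le> ereal ((1 - t) * fu + t * fv)" by (simp add: epigraph_def ut_def)
        hence "f ut + ereal (q ut) \<le> ereal ((1 - t) * fu + t * fv + q ut)"
          by (metis add_right_mono plus_ereal.simps(1))
        moreover have "ereal (fu + q u) \<le> f ut + ereal (q ut)" using min[of ut] fu' by (simp add: q_def)
        ultimately have M: "fu + q u \<le> (1 - t) * fu + t * fv + q ut" by (metis ereal_less_eq(3) order_trans)
        have e: "ut - a = (u - a) + t *\<^sub>R (v - u)" by (simp add: ut_def algebra_simps)
        have "norm (ut - a)^2 = norm (u - a)^2 + 2 * inner (u - a) (t *\<^sub>R (v - u)) + norm (t *\<^sub>R (v - u))^2"
          unfolding e using dot_norm[of "u - a" "t *\<^sub>R (v - u)"] by simp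
        hence "norm (ut - a)^2 = norm (u - a)^2 + 2 * t * inner (u - a) (v - u) + t^2 * norm (v - u)^2"
          by (simp add: power_mult_distrib)
        hence "q ut = q u + t * (inner (u - a) (v - u) / lam) + t * (t * (norm (v - u)^2 / (2*lam)))"
          using lam by (simp add: q_def field_simps power2_eq_square)
        with M have "t * fu \<le> t * (fv + inner (u - a) (v - u) / lam + t * (norm (v - u)^2 / (2*lam)))"
          by (simp add: algebra_simps)
        hence "fu \<le> fv + inner (u - a) (v - u) / lam + t * (norm (v - u)^2 / (2*lam))"
          using t by simp
        moreover have "inner ((1 / lam) *\<^sub>R (a - u)) (v - u) = - (inner (u - a) (v - u) / lam)"
          using lam by (simp add: inner_diff_left field_simps)
        ultimately show ?thesis by linarith
      qed
      have "fu + inner ((1 / lam) *\<^sub>R (a - u)) (v - u) \<le> fv"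
        by (rule small_t_limit[OF _ key]) (use lam in auto)
      thus ?thesis using fu' real by simp
    next
      case PInf thus ?thesis by simp
    next
      case MInf thus ?thesis using ccp_props[OF ccp] by blast
    qed
  qed
qed

lemma fenchel_young:
  assumes fw: "f w = ereal fw" and sg: "yv \<in> subdiff f w"
  shows "fconj f yv = ereal (inner w yv - fw)" "\<And>u. ereal (inner w u - fw) \<le> fconj f u"
proof -
  show "ereal (inner w u - fw) \<le> fconj f u" for u
    unfolding fconj_def using fw by (intro SUP_upper2[of w]) auto
  show "fconj f yv = ereal (inner w yv - fw)"
  proof (rule antisym)
    show "fconj f yv \<le> ereal (inner w yv - fw)"
      unfolding fconj_def
    proof (rule SUP_least)
      fix w' :: 'a
      have s: "f w + ereal (inner yv (w' - w)) \<le> f w'" using sg by (auto simp: subdiff_def)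
      show "ereal (inner w' yv) - f w' \<le> ereal (inner w yv - fw)"
      proof (cases "f w'")
        case (real r)
        hence "fw + inner yv (w' - w) \<le> r" using s fw by simp
        thus ?thesis using real by (simp add: inner_diff_right inner_commute)
      next
        case PInf thus ?thesis by simp
      next
        case MInf thus ?thesis using s fw by simp
      qed
    qed
    show "ereal (inner w yv - fw) \<le> fconj f yv"
      unfolding fconj_def using fw by (intro SUP_upper2[of w]) auto
  qed
qed


lemma prox_props:
  fixes f :: "'a::euclidean_space \<Rightarrow> ereal"
  assumes ccp: "closed_convex_proper f" and lam: "lam > 0"
  shows "f (Prox lam f a) < \<infinity>" "(1 / lam) *\<^sub>R (a - Prox lam f a) \<in> subdiff f (Prox lam f a)"
proof -
  have "\<forall>v. f (Prox lam f a) + ereal (norm (Prox lam f a - a)^2 / (2 * lam)) \<le> f v + ereal (norm (v - a)^2 / (2 * lam))"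
    unfolding Prox_def by (rule someI_ex[OF prox_exists[OF ccp lam]])
  thus "f (Prox lam f a) < \<infinity>" "(1 / lam) *\<^sub>R (a - Prox lam f a) \<in> subdiff f (Prox lam f a)"
    using prox_subgrad[OF ccp lam] by blast+
qed

lemma conj_key:
  fixes wv u yh a :: "'a::real_inner"
  assumes lam: "lam > 0" and yh: "yh = a - lam *\<^sub>R wv"
  shows "inner wv u + norm (u - a)^2 / (2*lam) = inner wv yh + norm (yh - a)^2 / (2*lam) + norm (u - yh)^2 / (2*lam)"
proof -
  have e: "u - a = (u - yh) + (yh - a)" by simp
  have ya: "yh - a = - (lam *\<^sub>R wv)" using yh by simp
  have "norm (u - a)^2 = norm (u - yh)^2 + 2 * inner (u - yh) (yh - a) + norm (yh - a)^2"
    unfolding e using dot_norm[of "u - yh" "yh - a"] by simp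
  also have "inner (u - yh) (yh - a) = - lam * (inner wv u - inner wv yh)"
  proof -
    have "inner (u - yh) wv = inner wv u - inner wv yh" by (metis inner_commute inner_diff_left)
    thus ?thesis unfolding ya by simp
  qed
  finally show ?thesis using lam by (simp add: field_simps)
qed

lemma prox_conj:
  fixes f :: "'a::euclidean_space \<Rightarrow> ereal"
  assumes ccp: "closed_convex_proper f" and lam: "lam > 0"
    and wdef: "wv = Prox (1 / lam) f b" and ab: "b = (1 / lam) *\<^sub>R a"
  shows "Prox lam (fconj f) a = a - lam *\<^sub>R wv" "f wv < \<infinity>" "a - lam *\<^sub>R wv \<in> subdiff f wv"
    "fconj f (a - lam *\<^sub>R wv) < \<infinity>"
proof -
  have lam': "1 / lam > 0" using lam by simp
  show fwv: "f wv < \<infinity>" using prox_props(1)[OF ccp lam'] wdef by simp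
  have "(1 / (1 / lam)) *\<^sub>R (b - wv) \<in> subdiff f wv" using prox_props(2)[OF ccp lam'] wdef by simp
  moreover have "(1 / (1 / lam)) *\<^sub>R (b - wv) = a - lam *\<^sub>R wv" using lam ab by (simp add: algebra_simps)
  ultimately show sg: "a - lam *\<^sub>R wv \<in> subdiff f wv" by simp
  define yh where "yh = a - lam *\<^sub>R wv"
  have "f wv \<noteq> -\<infinity>" using ccp_props[OF ccp] by blast
  then obtain fw where fw: "f wv = ereal fw" using fwv by (cases "f wv") auto
  have cyh: "fconj f yh = ereal (inner wv yh - fw)" using fenchel_young(1)[OF fw sg] yh_def by simp
  have lb: "\<And>u. ereal (inner wv u - fw) \<le> fconj f u" using fenchel_young(2)[OF fw sg] by blast
  show "fconj f (a - lam *\<^sub>R wv) < \<infinity>" using cyh yh_def by simp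
  define q where "q v = norm (v - a)^2 / (2 * lam)" for v
  have key: "inner wv u - fw + q u = (inner wv yh - fw) + q yh + norm (u - yh)^2 / (2*lam)" for u
    using conj_key[OF lam yh_def, of u] unfolding q_def by linarith
  have Pyh: "\<forall>v. fconj f yh + ereal (q yh) \<le> fconj f v + ereal (q v)"
  proof
    fix v
    have "ereal (inner wv yh - fw + q yh) \<le> ereal (inner wv v - fw + q v)"
      using key[of v] lam by simp
    also have "\<dots> \<le> fconj f v + ereal (q v)" using add_right_mono[OF lb[of v], of "ereal (q v)"] by simp
    finally show "fconj f yh + ereal (q yh) \<le> fconj f v + ereal (q v)" using cyh by simp
  qed
  have uniq: "u' = yh" if P: "\<forall>v. fconj f u' + ereal (q u') \<le> fconj f v + ereal (q v)" for u'
  proof -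
    have "ereal (inner wv u' - fw + q u') \<le> fconj f u' + ereal (q u')"
      using add_right_mono[OF lb[of u'], of "ereal (q u')"] by simp
    also have "\<dots> \<le> ereal (inner wv yh - fw + q yh)" using P[rule_format, of yh] cyh by simp
    finally have "inner wv u' - fw + q u' \<le> inner wv yh - fw + q yh" by simp
    hence "norm (u' - yh)^2 / (2*lam) \<le> 0" using key[of u'] by linarith
    hence "norm (u' - yh)^2 \<le> 0" using lam by (simp add: divide_le_0_iff)
    thus ?thesis by simp
  qed
  have Pyh': "\<forall>v. fconj f yh + ereal (norm (yh - a)^2 / (2 * lam)) \<le> fconj f v + ereal (norm (v - a)^2 / (2 * lam))"
    using Pyh unfolding q_def .
  have uniq': "u' = yh" if "\<forall>v. fconj f u' + ereal (norm (u' - a)^2 / (2 * lam)) \<le> fconj f v + ereal (norm (v - a)^2 / (2 * lam))" for u'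
    using uniq that unfolding q_def by blast
  have "Prox lam (fconj f) a = yh"
    unfolding Prox_def by (rule some_equality) (use Pyh' uniq' in blast)+
  thus "Prox lam (fconj f) a = a - lam *\<^sub>R wv" by (simp add: yh_def)
qed


lemma jacT_inner:
  fixes D :: "'a::euclidean_space \<Rightarrow> 'b::real_inner"
  assumes lin: "linear D"
  shows "inner (D d) y = inner (jacT D y) d"
proof -
  have "D d = D (\<Sum>i\<in>Basis. inner d i *\<^sub>R i)" by (simp add: euclidean_representation)
  also have "\<dots> = (\<Sum>i\<in>Basis. inner d i *\<^sub>R D i)"
    using lin by (simp add: linear_sum linear_scale)
  finally have "inner (D d) y = (\<Sum>i\<in>Basis. inner d i * inner (D i) y)"
    by (simp add: inner_sum_left)
  moreover have "inner (jacT D y) d = (\<Sum>i\<in>Basis. inner y (D i) * inner i d)"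
    by (simp add: jacT_def inner_sum_left)
  ultimately show ?thesis by (simp add: inner_commute mult.commute)
qed

lemma tau_pos:
  assumes alg: "pdacl_iterates f g h gradh H H' \<psi> \<xi> \<phi> \<tau>max \<nu> \<mu> \<eta> M \<beta> x y z \<tau> \<delta> w"
  shows "\<tau> k > 0"
proof (induction k)
  case 0 thus ?case using alg by (simp add: pdacl_iterates_def)
next
  case (Suc k)
  have pars: "1 < \<phi>" "0 < \<tau>max" "0 < \<mu>" using alg by (auto simp: pdacl_iterates_def)
  from alg have "\<exists>i::nat. \<tau> (Suc k) = min (\<phi> * \<tau> k) \<tau>max * \<mu>^i"
    unfolding pdacl_iterates_def Let_def by (metis diff_Suc_1 le_add1 plus_1_eq_Suc)
  then obtain i where "\<tau> (Suc k) = min (\<phi> * \<tau> k) \<tau>max * \<mu>^i" by blast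
  thus ?case using pars Suc by simp
qed

theorem lemma4p1:
  fixes f :: "'b::euclidean_space \<Rightarrow> ereal" and g :: "'a::euclidean_space \<Rightarrow> ereal"
    and h :: "'a \<Rightarrow> real" and gradh :: "'a \<Rightarrow> 'a" and Lh :: real
    and H :: "'a \<Rightarrow> 'b" and H' :: "'a \<Rightarrow> 'a \<Rightarrow> 'b"
    and xs :: 'a and ws :: 'b and ys :: 'b
    and \<psi> \<xi> \<phi> \<tau>max \<nu> \<mu> \<eta> \<beta> :: real and M :: nat
    and x z :: "nat \<Rightarrow> 'a" and y w :: "nat \<Rightarrow> 'b" and \<tau> \<delta> :: "nat \<Rightarrow> real"
  assumes f_ccp: "closed_convex_proper f" and g_ccp: "closed_convex_proper g"
    and h_conv: "convex_on UNIV h"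
    and h_grad: "\<And>u. (h has_derivative (\<lambda>d. inner (gradh u) d)) (at u)"
    and Lh_nonneg: "Lh \<ge> 0"
    and h_lip: "\<And>u v. norm (gradh u - gradh v) \<le> Lh * norm (u - v)"
    and H_diff: "\<And>u. u \<in> edom g \<Longrightarrow> (H has_derivative H' u) (at u)"
    and H_C1: "\<And>d. continuous_on (edom g) (\<lambda>u. H' u d)"
    and H_maps: "H ` edom g \<subseteq> edom f"
    and H_conv: "\<And>v. v \<in> edom (fconj f) \<Longrightarrow> convex_on (edom g) (\<lambda>u. inner (H u) v)"
    and A1: "\<exists>xa ya. xa \<in> edom g \<and> ya \<in> edom (fconj f) \<and>
               - gradxPhi gradh H' xa ya \<in> subdiff g xa \<and>
               gradyPhi H xa ya \<in> subdiff (fconj f) ya"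
    and A2: "\<And>X Y. bounded X \<Longrightarrow> bounded Y \<Longrightarrow>
               \<exists>Lyy Lxx Lxy. Lyy \<ge> 0 \<and> Lxx \<ge> 0 \<and> Lxy > 0 \<and>
                 (\<forall>u\<in>X \<inter> edom g. \<forall>u'\<in>X \<inter> edom g. \<forall>v\<in>Y \<inter> edom (fconj f). \<forall>v'\<in>Y \<inter> edom (fconj f).
                    norm (gradyPhi H u v - gradyPhi H u v') \<le> Lyy * norm (v - v') \<and>
                    norm (gradxPhi gradh H' u v - gradxPhi gradh H' u' v')
                      \<le> Lxx * norm (u - u') + Lxy * norm (v - v'))"
    and fixpt: "xs \<in> edom g" "ws \<in> edom f" "ys \<in> edom (fconj f)"
      "- jacT (H' xs) ys - gradh xs \<in> subdiff g xs" "ys \<in> subdiff f ws" "H xs = ws"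
    and alg: "pdacl_iterates f g h gradh H H' \<psi> \<xi> \<phi> \<tau>max \<nu> \<mu> \<eta> M \<beta> x y z \<tau> \<delta> w"
    and n: "n \<ge> 1"
  shows "ereal (\<tau> n) *
           (g (x n) + ereal (h (x n)) + f (w n) + ereal (inner v (H (x n) - w n))
              - (g xs + ereal (h xs) + f ws))
         \<le> ereal (inner (x (n + 1) - z (n + 1)) (xs - x (n + 1))
              + (1 / \<beta>) * inner (y n - y (n - 1)) (v - y n)
              + \<psi> * \<delta> n * inner (x n - z (n + 1)) (x (n + 1) - x n)
              + \<tau> n * inner (gradxPhi gradh H' (x n) (y n) - gradxPhi gradh H' (x (n - 1)) (y (n - 1)))
                             (x n - x (n + 1)))"
proof -
  have pars: "1 < \<psi>" "0 < \<beta>" using alg by (auto simp: pdacl_iterates_def)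
  have step: "\<And>k. k \<ge> 1 \<Longrightarrow>
        z k = ((\<psi> - 1) / \<psi>) *\<^sub>R x (k - 1) + (1 / \<psi>) *\<^sub>R z (k - 1) \<and>
        x k = Prox (\<tau> (k - 1)) g (z k - \<tau> (k - 1) *\<^sub>R gradxPhi gradh H' (x (k - 1)) (y (k - 1))) \<and>
        y k = ytrial f H \<beta> x y k (\<tau> k) \<and>
        \<delta> k = \<tau> k / \<tau> (k - 1) \<and>
        w k = Prox (1 / (\<beta> * \<tau> k)) f ((1 / (\<beta> * \<tau> k)) *\<^sub>R y (k - 1) + H (x k))"
    using alg unfolding pdacl_iterates_def by blast
  have s1: "z n = ((\<psi> - 1) / \<psi>) *\<^sub>R x (n - 1) + (1 / \<psi>) *\<^sub>R z (n - 1)"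
    "x n = Prox (\<tau> (n - 1)) g (z n - \<tau> (n - 1) *\<^sub>R gradxPhi gradh H' (x (n - 1)) (y (n - 1)))"
    "y n = ytrial f H \<beta> x y n (\<tau> n)"
    "\<delta> n = \<tau> n / \<tau> (n - 1)"
    "w n = Prox (1 / (\<beta> * \<tau> n)) f ((1 / (\<beta> * \<tau> n)) *\<^sub>R y (n - 1) + H (x n))"
    using step[OF n] by auto
  have s2: "z (n + 1) = ((\<psi> - 1) / \<psi>) *\<^sub>R x n + (1 / \<psi>) *\<^sub>R z n"
    "x (n + 1) = Prox (\<tau> n) g (z (n + 1) - \<tau> n *\<^sub>R gradxPhi gradh H' (x n) (y n))"
    using step[of "n + 1"] by auto
  have t0: "\<tau> (n - 1) > 0" and t1: "\<tau> n > 0" using tau_pos[OF alg] by auto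
  have lam: "\<beta> * \<tau> n > 0" using pars t1 by simp
  have bb: "(1 / (\<beta> * \<tau> n)) *\<^sub>R y (n - 1) + H (x n) = (1 / (\<beta> * \<tau> n)) *\<^sub>R (y (n - 1) + (\<beta> * \<tau> n) *\<^sub>R H (x n))"
    using pars t1 by (simp add: scaleR_right_distrib)
  note pc = prox_conj[OF f_ccp lam s1(5) bb]
  have Y1: "y n = y (n - 1) + (\<beta> * \<tau> n) *\<^sub>R H (x n) - (\<beta> * \<tau> n) *\<^sub>R w n"
    using pc(1) s1(3) by (simp add: ytrial_def)
  have fW: "f (w n) < \<infinity>" using pc(2) .
  have sgf: "y n \<in> subdiff f (w n)" using pc(3) Y1 by simp
  have ydom: "y n \<in> edom (fconj f)" using pc(4) Y1 by (simp add: edom_def)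
  note px1 = prox_props[OF g_ccp t0, of "z n - \<tau> (n - 1) *\<^sub>R gradxPhi gradh H' (x (n - 1)) (y (n - 1))", folded s1(2)]
  note px2 = prox_props[OF g_ccp t1, of "z (n + 1) - \<tau> n *\<^sub>R gradxPhi gradh H' (x n) (y n)", folded s2(2)]
  have X1dom: "x n \<in> edom g" using px1(1) by (simp add: edom_def)
  have ninf: "\<And>u. g u \<noteq> -\<infinity>" "\<And>u. f u \<noteq> -\<infinity>" using ccp_props(1) f_ccp g_ccp by blast+
  obtain gX1 where gX1: "g (x n) = ereal gX1" using px1(1) ninf(1)[of "x n"] by (cases "g (x n)") auto
  obtain gX2 where gX2: "g (x (n + 1)) = ereal gX2" using px2(1) ninf(1)[of "x (n + 1)"] by (cases "g (x (n + 1))") auto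
  obtain gxs where gxs: "g xs = ereal gxs" using fixpt(1) ninf(1)[of xs] by (cases "g xs") (auto simp: edom_def)
  obtain fW where fWr: "f (w n) = ereal fW" using fW ninf(2)[of "w n"] by (cases "f (w n)") auto
  obtain fws where fws: "f ws = ereal fws" using fixpt(2) ninf(2)[of ws] by (cases "f ws") (auto simp: edom_def)
  define G0 where "G0 = gradxPhi gradh H' (x (n - 1)) (y (n - 1))"
  define G1 where "G1 = gradxPhi gradh H' (x n) (y n)"
  define p1 where "p1 = (1 / \<tau> n) *\<^sub>R (z (n + 1) - \<tau> n *\<^sub>R G1 - x (n + 1))"
  define p2 where "p2 = (1 / \<tau> (n - 1)) *\<^sub>R (z n - \<tau> (n - 1) *\<^sub>R G0 - x n)"
  have "g (x (n + 1)) + ereal (inner p1 (xs - x (n + 1))) \<le> g xs"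
    using px2(2) unfolding p1_def G1_def subdiff_def by blast
  hence F1: "gX2 + inner p1 (xs - x (n + 1)) \<le> gxs" using gX2 gxs by simp
  have "g (x n) + ereal (inner p2 (x (n + 1) - x n)) \<le> g (x (n + 1))"
    using px1(2) unfolding p2_def G0_def subdiff_def by blast
  hence F2: "gX1 + inner p2 (x (n + 1) - x n) \<le> gX2" using gX1 gX2 by simp
  have F3: "h (x n) + inner (gradh (x n)) (xs - x n) \<le> h xs"
    using convex_tangent[OF h_conv UNIV_I UNIV_I h_grad] by simp
  have Hd: "((\<lambda>u. inner (H u) (y n)) has_derivative (\<lambda>d. inner (H' (x n) d) (y n))) (at (x n))"
    using H_diff[OF X1dom] by (rule has_derivative_inner_left)
  have linH: "linear (H' (x n))" using H_diff[OF X1dom] has_derivative_linear by blast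
  have "inner (H (x n)) (y n) + inner (H' (x n) (xs - x n)) (y n) \<le> inner (H xs) (y n)"
    using convex_tangent[OF H_conv[OF ydom] X1dom fixpt(1) Hd] by simp
  hence F4: "inner (H (x n)) (y n) + inner (jacT (H' (x n)) (y n)) (xs - x n) \<le> inner (H xs) (y n)"
    using jacT_inner[OF linH] by simp
  have "f (w n) + ereal (inner (y n) (ws - w n)) \<le> f ws"
    using sgf unfolding subdiff_def by blast
  hence F5: "fW + inner (y n) (ws - w n) \<le> fws" using fWr fws by simp
  have psi0: "\<psi> \<noteq> 0" using pars by simp
  have "\<psi> *\<^sub>R z (n + 1) = (\<psi> - 1) *\<^sub>R x n + z n"
    using s2(1) psi0 by (simp add: scaleR_right_distrib)
  hence Z: "z n - x n = \<psi> *\<^sub>R (z (n + 1) - x n)" by (simp add: algebra_simps)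
  have "\<tau> n *\<^sub>R p1 = (z (n + 1) - x (n + 1)) - \<tau> n *\<^sub>R G1" using t1 by (simp add: p1_def algebra_simps)
  hence "\<tau> n * inner p1 (xs - x (n + 1)) = inner ((z (n + 1) - x (n + 1)) - \<tau> n *\<^sub>R G1) (xs - x (n + 1))"
    by (metis inner_scaleR_left)
  hence D1: "\<tau> n * inner p1 (xs - x (n + 1)) = - inner (x (n + 1) - z (n + 1)) (xs - x (n + 1)) - \<tau> n * inner G1 (xs - x (n + 1))"
    by (simp add: inner_diff_left)
  have "\<tau> n *\<^sub>R p2 = (\<tau> n / \<tau> (n - 1)) *\<^sub>R (z n - x n) - \<tau> n *\<^sub>R G0" using t0 by (simp add: p2_def algebra_simps)
  also have "\<dots> = (\<psi> * \<delta> n) *\<^sub>R (z (n + 1) - x n) - \<tau> n *\<^sub>R G0" by (simp add: Z s1(4) mult.commute)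
  finally have "\<tau> n * inner p2 (x (n + 1) - x n) = inner ((\<psi> * \<delta> n) *\<^sub>R (z (n + 1) - x n) - \<tau> n *\<^sub>R G0) (x (n + 1) - x n)"
    by (metis inner_scaleR_left)
  hence D2: "\<tau> n * inner p2 (x (n + 1) - x n) = - (\<psi> * \<delta> n * inner (x n - z (n + 1)) (x (n + 1) - x n)) - \<tau> n * inner G0 (x (n + 1) - x n)"
    by (simp add: inner_diff_left algebra_simps)
  have D3: "\<tau> n * inner G1 (xs - x n) = \<tau> n * inner (gradh (x n)) (xs - x n) + \<tau> n * inner (jacT (H' (x n)) (y n)) (xs - x n)"
    by (simp add: G1_def gradxPhi_def inner_add_left distrib_left)
  have e1: "inner v (H (x n) - w n) - inner (y n) (ws - w n) - inner (H (x n)) (y n) + inner (H xs) (y n) = inner (H (x n) - w n) (v - y n)"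
    using fixpt(6) by (simp add: inner_diff_left inner_diff_right inner_commute)
  have "y n - y (n - 1) = (\<beta> * \<tau> n) *\<^sub>R (H (x n) - w n)" using Y1 by (simp add: algebra_simps)
  hence e2: "(1 / \<beta>) * inner (y n - y (n - 1)) (v - y n) = \<tau> n * inner (H (x n) - w n) (v - y n)"
    using pars by simp
  have D4: "\<tau> n * inner v (H (x n) - w n) - \<tau> n * inner (y n) (ws - w n) - \<tau> n * inner (H (x n)) (y n) + \<tau> n * inner (H xs) (y n) = (1 / \<beta>) * inner (y n - y (n - 1)) (v - y n)"
    using e1 e2 by (metis (no_types, lifting) add_diff_eq distrib_left right_diff_distrib')
  have D5: "\<tau> n * inner (G1 - G0) (x n - x (n + 1)) = \<tau> n * inner G1 (x n - x (n + 1)) - \<tau> n * inner G0 (x n - x (n + 1))"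
    by (simp add: inner_diff_left right_diff_distrib)
  have D6: "\<tau> n * inner G1 (xs - x (n + 1)) = \<tau> n * inner G1 (xs - x n) + \<tau> n * inner G1 (x n - x (n + 1))"
    by (simp add: inner_diff_right algebra_simps)
  have D7: "\<tau> n * inner G0 (x (n + 1) - x n) = - (\<tau> n * inner G0 (x n - x (n + 1)))"
    by (simp add: inner_diff_right algebra_simps)
  have tn: "\<tau> n \<ge> 0" using t1 by simp
  have M1: "\<tau> n * gX2 + \<tau> n * inner p1 (xs - x (n + 1)) \<le> \<tau> n * gxs"
    using mult_left_mono[OF F1 tn] by (simp add: distrib_left)
  have M2: "\<tau> n * gX1 + \<tau> n * inner p2 (x (n + 1) - x n) \<le> \<tau> n * gX2"
    using mult_left_mono[OF F2 tn] by (simp add: distrib_left)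
  have M3: "\<tau> n * h (x n) + \<tau> n * inner (gradh (x n)) (xs - x n) \<le> \<tau> n * h xs"
    using mult_left_mono[OF F3 tn] by (simp add: distrib_left)
  have M4: "\<tau> n * inner (H (x n)) (y n) + \<tau> n * inner (jacT (H' (x n)) (y n)) (xs - x n) \<le> \<tau> n * inner (H xs) (y n)"
    using mult_left_mono[OF F4 tn] by (simp add: distrib_left)
  have M5: "\<tau> n * fW + \<tau> n * inner (y n) (ws - w n) \<le> \<tau> n * fws"
    using mult_left_mono[OF F5 tn] by (simp add: distrib_left)
  have L: "\<tau> n * (gX1 + h (x n) + fW + inner v (H (x n) - w n) - (gxs + h xs + fws))
     = \<tau> n * gX1 + \<tau> n * h (x n) + \<tau> n * fW + \<tau> n * inner v (H (x n) - w n) - \<tau> n * gxs - \<tau> n * h xs - \<tau> n * fws"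
    by (simp add: algebra_simps)
  have R: "\<tau> n * (gX1 + h (x n) + fW + inner v (H (x n) - w n) - (gxs + h xs + fws))
     \<le> inner (x (n + 1) - z (n + 1)) (xs - x (n + 1)) + (1 / \<beta>) * inner (y n - y (n - 1)) (v - y n)
        + \<psi> * \<delta> n * inner (x n - z (n + 1)) (x (n + 1) - x n) + \<tau> n * inner (G1 - G0) (x n - x (n + 1))"
    using M1 M2 M3 M4 M5 D1 D2 D3 D4 D5 D6 D7 L by linarith
  show ?thesis using R gX1 gxs fWr fws unfolding G0_def G1_def by simp
qed

end
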